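(* Let $f:\mathbb{R}\to(0,\infty)$ be $C^4$, unimodal with maximum at $\mu$, of the form $f=e^{-H}$ with $H$ regularly varying (there is $\alpha>0$ with $H(tx)/H(t)\to x^\alpha$ as $|t|\to\infty$ for all $x>0$), and with $|(\log f)''''|<M$ for some $M>0$. Then for $\beta>0$, $$M'(\beta)=\mathrm{Var}_\beta(h(X)),\qquad S(\beta)=-\frac1\beta,\qquad S'(\beta)=\frac1{\beta^2}.$$
   Context: $h=\log f$, $k(x)=(x-\mu)h'(x)$; $\mathbb{E}_\beta,\mathrm{Var}_\beta$ denote moments under the density $f^\beta(x)/Z_\beta$ with $Z_\beta=\int f^\beta(z)\,dz$; $M(\beta)=\mathbb{E}_\beta[h(X)]$ and $S(\beta)=\mathbb{E}_\beta[k(X)]$. *)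

theory Defs
  imports "HOL-Analysis.Analysis"
begin

definition C4 :: "(real \<Rightarrow> real) \<Rightarrow> bool" where
  "C4 f \<longleftrightarrow> (\<forall>k<4. \<forall>x. ((deriv ^^ k) f has_real_derivative (deriv ^^ Suc k) f x) (at x))
              \<and> continuous_on UNIV ((deriv ^^ 4) f)"

definition logf :: "(real \<Rightarrow> real) \<Rightarrow> real \<Rightarrow> real" where
  "logf f = (\<lambda>x. ln (f x))"

definition Zb :: "(real \<Rightarrow> real) \<Rightarrow> real \<Rightarrow> real" where
  "Zb f \<beta> = (\<integral>x. f x powr \<beta> \<partial>lborel)"

definition Eb :: "(real \<Rightarrow> real) \<Rightarrow> real \<Rightarrow> (real \<Rightarrow> real) \<Rightarrow> real" where
  "Eb f \<beta> g = (\<integral>x. g x * f x powr \<beta> \<partial>lborel) / Zb f \<beta>"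

definition Varb :: "(real \<Rightarrow> real) \<Rightarrow> real \<Rightarrow> (real \<Rightarrow> real) \<Rightarrow> real" where
  "Varb f \<beta> g = Eb f \<beta> (\<lambda>x. (g x - Eb f \<beta> g)\<^sup>2)"

definition Mfun :: "(real \<Rightarrow> real) \<Rightarrow> real \<Rightarrow> real" where
  "Mfun f \<beta> = Eb f \<beta> (logf f)"

definition kfun :: "(real \<Rightarrow> real) \<Rightarrow> real \<Rightarrow> real \<Rightarrow> real" where
  "kfun f \<mu> x = (x - \<mu>) * deriv (logf f) x"

definition Sfun :: "(real \<Rightarrow> real) \<Rightarrow> real \<Rightarrow> real \<Rightarrow> real" where
  "Sfun f \<mu> \<beta> = Eb f \<beta> (kfun f \<mu>)"

end

theory Submission
  imports Defs "HOL-Probability.Sinc_Integral"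
begin

lemma deriv_under_integral:
  fixes F F' :: "real \<Rightarrow> real \<Rightarrow> real" and g :: "real \<Rightarrow> real" and a c b0 :: real
  assumes ab: "a < b0" "b0 < c"
  and int: "\<And>b. b \<in> {a<..<c} \<Longrightarrow> integrable lborel (F b)"
  and der: "\<And>b x. b \<in> {a<..<c} \<Longrightarrow> ((\<lambda>b. F b x) has_real_derivative F' b x) (at b)"
  and g: "integrable lborel g"
  and bnd: "\<And>b x. b \<in> {a<..<c} \<Longrightarrow> \<bar>F' b x\<bar> \<le> g x"
  and F'meas: "F' b0 \<in> borel_measurable lborel"
  shows "((\<lambda>b. \<integral>x. F b x \<partial>lborel) has_real_derivative (\<integral>x. F' b0 x \<partial>lborel)) (at b0)"
proof -
  let ?I = "{a<..<c}"
  have b0I: "b0 \<in> ?I" using ab by auto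
  have "((\<lambda>b. ((\<integral>x. F b x \<partial>lborel) - (\<integral>x. F b0 x \<partial>lborel)) / (b - b0)) \<longlongrightarrow> (\<integral>x. F' b0 x \<partial>lborel)) (at b0 within ?I)"
    unfolding tendsto_at_iff_sequentially
  proof (intro allI impI)
    fix X :: "nat \<Rightarrow> real"
    assume XI: "\<forall>i. X i \<in> ?I - {b0}" and Xl: "X \<longlonglongrightarrow> b0"
    define s where "s i x = (F (X i) x - F b0 x) / (X i - b0)" for i x
    have Xne: "X i \<noteq> b0" for i using XI by auto
    have lip: "\<bar>F b x - F b0 x\<bar> \<le> g x * \<bar>b - b0\<bar>" if "b \<in> ?I" for b x
    proof -
      have "norm (F b x - F b0 x) \<le> g x * norm (b - b0)"
        by (rule field_differentiable_bound[where S="?I" and f="\<lambda>b. F b x" and f'="\<lambda>b. F' b x"])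
           (use that b0I bnd der in \<open>auto intro: has_field_derivative_at_within\<close>)
      then show ?thesis by simp
    qed
    have "(\<lambda>i. integral\<^sup>L lborel (s i)) \<longlonglongrightarrow> integral\<^sup>L lborel (F' b0)"
    proof (rule integral_dominated_convergence[where w=g])
      show "F' b0 \<in> borel_measurable lborel" by (rule F'meas)
      show "s i \<in> borel_measurable lborel" for i
        unfolding s_def using int XI b0I by (auto intro!: borel_measurable_divide borel_measurable_diff)
      show "integrable lborel g" by (rule g)
      show "AE x in lborel. (\<lambda>i. s i x) \<longlonglongrightarrow> F' b0 x"
      proof (rule AE_I2)
        fix x
        have "((\<lambda>b. (F b x - F b0 x) / (b - b0)) \<longlongrightarrow> F' b0 x) (at b0)"
          using der[OF b0I, of x] by (simp add: has_field_derivative_iff)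
        then have "((\<lambda>b. (F b x - F b0 x) / (b - b0)) \<longlongrightarrow> F' b0 x) (at b0 within ?I)"
          by (rule tendsto_within_subset) auto
        then show "(\<lambda>i. s i x) \<longlonglongrightarrow> F' b0 x"
          unfolding tendsto_at_iff_sequentially s_def comp_def using XI Xl by auto
      qed
      show "AE x in lborel. norm (s i x) \<le> g x" for i
      proof (rule AE_I2)
        fix x
        have "\<bar>F (X i) x - F b0 x\<bar> \<le> g x * \<bar>X i - b0\<bar>" using lip XI by auto
        then show "norm (s i x) \<le> g x" using Xne[of i]
          by (simp add: s_def abs_divide divide_le_eq)
      qed
    qed
    moreover have "integral\<^sup>L lborel (s i) = ((\<integral>x. F (X i) x \<partial>lborel) - (\<integral>x. F b0 x \<partial>lborel)) / (X i - b0)" for i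
      unfolding s_def using int XI b0I by (simp add: integral_diff)
    ultimately show "((\<lambda>b. ((\<integral>x. F b x \<partial>lborel) - (\<integral>x. F b0 x \<partial>lborel)) / (b - b0)) \<circ> X) \<longlonglongrightarrow> (\<integral>x. F' b0 x \<partial>lborel)"
      by (simp add: comp_def)
  qed
  then have "((\<lambda>b. ((\<integral>x. F b x \<partial>lborel) - (\<integral>x. F b0 x \<partial>lborel)) / (b - b0)) \<longlongrightarrow> (\<integral>x. F' b0 x \<partial>lborel)) (at b0)"
    using at_within_open[OF b0I] by simp
  then show ?thesis by (simp add: has_field_derivative_iff)
qed

lemma growth:
  fixes G :: "real \<Rightarrow> real" and c L :: real
  assumes mono: "\<And>s t. c \<le> s \<Longrightarrow> s \<le> t \<Longrightarrow> G s \<le> G t"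
  and lim: "((\<lambda>t. G (t*2) / G t) \<longlongrightarrow> L) at_top" and L: "L > 1"
  shows "\<exists>a>0. \<exists>\<gamma>>0. \<exists>T>0. \<forall>t\<ge>T. a * t powr \<gamma> \<le> G t"
proof -
  define q where "q = (1 + L) / 2"
  have q1: "q > 1" "q < L" using L by (auto simp: q_def)
  have "\<forall>\<^sub>F t in at_top. G (t*2) / G t > q"
    using lim q1(2) by (rule order_tendstoD)
  then obtain T0 where T0: "\<And>t. t \<ge> T0 \<Longrightarrow> G (t*2) / G t > q"
    by (auto simp: eventually_at_top_linorder)
  define T where "T = max T0 (max c 1)"
  have T1: "T \<ge> 1" "T \<ge> c" "T \<ge> T0" by (auto simp: T_def)
  have key: "G t > 0 \<and> G (t*2) \<ge> q * G t" if t: "t \<ge> T" for t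
  proof -
    have r: "G (t*2) / G t > q" using T0 T1 t by auto
    have m: "G t \<le> G (t*2)" using mono[of t "t*2"] T1 t by auto
    have "G t \<noteq> 0" using r q1 by auto
    moreover have "\<not> G t < 0"
    proof
      assume neg: "G t < 0"
      then have "G (t*2) < q * G t" using r by (simp add: less_divide_eq)
      also have "q * G t < G t" using neg q1 by (simp add: mult_less_cancel_right)
      finally show False using m by simp
    qed
    ultimately have pos: "G t > 0" by linarith
    then have "G (t*2) > q * G t" using r by (simp add: less_divide_eq)
    then show ?thesis using pos by simp
  qed
  have ind: "\<forall>t. T * 2^n \<le> t \<longrightarrow> G T * q^n \<le> G t" for n
  proof (induction n)
    case 0
    then show ?case using mono T1 by auto
  next
    case (Suc n)
    show ?case
    proof (intro allI impI)
      fix t assume t: "T * 2 ^ Suc n \<le> t"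
      then have t2: "T * 2^n \<le> t/2" by simp
      have "T \<le> T * 2^n" using T1 by simp
      then have tT: "T \<le> t/2" using t2 by linarith
      have "G T * q ^ Suc n = q * (G T * q^n)" by simp
      also have "\<dots> \<le> q * G (t/2)" using Suc t2 q1 by auto
      also have "\<dots> \<le> G ((t/2)*2)" using key[OF tT] by simp
      finally show "G T * q ^ Suc n \<le> G t" by simp
    qed
  qed
  define \<gamma> where "\<gamma> = log 2 q"
  have \<gamma>: "\<gamma> > 0" using q1 by (simp add: \<gamma>_def)
  have GT: "G T > 0" using key[of T] by simp
  define a where "a = G T / (q * T powr \<gamma>)"
  have a: "a > 0" using GT q1 T1 by (simp add: a_def)
  have "a * t powr \<gamma> \<le> G t" if t: "t \<ge> T" for t
  proof -
    define n where "n = nat \<lfloor>log 2 (t/T)\<rfloor>"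
    have tT: "t / T \<ge> 1" using t T1 by simp
    have lg: "log 2 (t/T) \<ge> 0" using tT by simp
    have n1: "real n \<le> log 2 (t/T)" using lg by (simp add: n_def)
    have n2: "log 2 (t/T) < real n + 1" using lg by (simp add: n_def)
    have "2 powr real n \<le> t/T" using n1 tT le_log_iff[of 2 "t/T" "real n"] by simp
    then have "T * 2^n \<le> t" using T1 by (simp add: powr_realpow field_simps)
    then have Gt: "G T * q^n \<le> G t" using ind by blast
    have "t/T < 2 powr (real n + 1)" using n2 tT log_less_iff[of 2 "t/T" "real n + 1"] by simp
    then have "(t/T) powr \<gamma> \<le> (2 powr (real n + 1)) powr \<gamma>"
      using \<gamma> tT by (intro powr_mono2) auto
    also have "\<dots> = (2 powr \<gamma>) powr (real n + 1)" by (simp add: powr_powr mult.commute)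
    also have "2 powr \<gamma> = q" using q1 by (simp add: \<gamma>_def)
    also have "q powr (real n + 1) = q^(n+1)" using powr_realpow[of q "n+1"] q1 by (simp add: add.commute)
    finally have "(t/T) powr \<gamma> \<le> q^(n+1)" .
    then have "t powr \<gamma> \<le> T powr \<gamma> * q^(n+1)" using T1 tT
      by (simp add: powr_divide divide_le_eq mult.commute)
    then have "a * t powr \<gamma> \<le> a * (T powr \<gamma> * q^(n+1))" using a by simp
    also have "\<dots> = G T * q^n" using q1 T1 by (simp add: a_def field_simps)
    finally show ?thesis using Gt by linarith
  qed
  moreover have "T > 0" using T1 by simp
  ultimately show ?thesis using a \<gamma> by blast
qed

lemma growth_log:
  fixes G :: "real \<Rightarrow> real" and a \<gamma> T s :: real
  assumes a: "a > 0" and \<gamma>: "\<gamma> > 0" and T: "T > 0" and s: "s > 0"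
    and G: "\<forall>t\<ge>T. a * t powr \<gamma> \<le> G t"
  shows "\<exists>K. \<forall>t\<ge>T. exp (- s * G t) \<le> exp K / t^2"
proof -
  define \<delta> where "\<delta> = s * a * \<gamma> / 2"
  have \<delta>: "\<delta> > 0" using a \<gamma> s by (simp add: \<delta>_def)
  define K where "K = (2/\<gamma>) * (- 1 - ln \<delta>)"
  have "exp (- s * G t) \<le> exp K / t^2" if t: "t \<ge> T" for t
  proof -
    have tp: "t > 0" using t T by simp
    have "ln (\<delta> * t powr \<gamma>) \<le> \<delta> * t powr \<gamma> - 1"
      using \<delta> tp by (intro ln_le_minus_one) simp
    then have l1: "ln \<delta> + \<gamma> * ln t \<le> \<delta> * t powr \<gamma> - 1"
      using \<delta> tp by (simp add: ln_mult ln_powr)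
    have "2 * ln t = (2/\<gamma>) * (\<gamma> * ln t)" using \<gamma> by simp
    also have "\<dots> \<le> (2/\<gamma>) * (\<delta> * t powr \<gamma> - 1 - ln \<delta>)"
      using l1 \<gamma> by (intro mult_left_mono) auto
    also have "\<dots> = s * (a * t powr \<gamma>) + K" using \<gamma> unfolding K_def \<delta>_def by (simp add: algebra_simps)
    also have "\<dots> \<le> s * G t + K" using G t s by (simp add: mult_left_mono)
    finally have "- s * G t \<le> K - 2 * ln t" by simp
    then have "exp (- s * G t) \<le> exp (K - 2 * ln t)" by simp
    also have "\<dots> = exp K / exp (2 * ln t)" by (rule exp_diff)
    also have "2 * ln t = ln (t^2)" using tp by (simp add: ln_realpow)
    also have "exp (ln (t^2)) = t^2" using tp by simp
    finally show ?thesis .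
  qed
  then show ?thesis by blast
qed

lemma dom_bound:
  fixes y m0 b c B :: real
  assumes y: "y \<le> m0" and c: "c > 0" and b: "2*c \<le> b" "b \<le> B"
  shows "(1 + y\<^sup>2) * exp (b*y) \<le> ((1+m0\<^sup>2) * exp (B*\<bar>m0\<bar>) + max 1 (2/c\<^sup>2)) * exp (c*y)"
proof -
  define K1 where "K1 = (1+m0\<^sup>2) * exp (B*\<bar>m0\<bar>)"
  define K2 where "K2 = max 1 (2/c\<^sup>2)"
  have K1: "K1 \<ge> 0" and K2: "K2 \<ge> 0" by (auto simp: K1_def K2_def)
  have e: "exp (b*y) = exp ((b-c)*y) * exp (c*y)" by (simp add: exp_add[symmetric] algebra_simps)
  have "(1 + y\<^sup>2) * exp ((b-c)*y) \<le> K1 + K2"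
  proof (cases "y \<ge> 0")
    case True
    have "y\<^sup>2 \<le> m0\<^sup>2" using True y by (intro power_mono) auto
    then have 1: "1 + y\<^sup>2 \<le> 1 + m0\<^sup>2" by simp
    have "(b-c)*y \<le> B*\<bar>m0\<bar>" using True y b c by (intro mult_mono) auto
    then have 2: "exp ((b-c)*y) \<le> exp (B*\<bar>m0\<bar>)" by simp
    have "(1 + y\<^sup>2) * exp ((b-c)*y) \<le> K1" unfolding K1_def
      using 1 2 by (intro mult_mono) auto
    then show ?thesis using K2 by simp
  next
    case False
    have "(b-c)*y \<le> c*y" using False b by (intro mult_right_mono_neg) auto
    then have 1: "exp ((b-c)*y) \<le> exp (c*y)" by simp
    have "1 + (-c*y) + (-c*y)\<^sup>2/2 \<le> exp (-c*y)" using False c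
      by (intro exp_lower_Taylor_quadratic) (simp add: mult_nonneg_nonpos)
    moreover have "-c*y \<ge> 0" using False c by (simp add: mult_nonneg_nonpos)
    ultimately have 2: "1 + c\<^sup>2*y\<^sup>2/2 \<le> exp (-c*y)" by (simp add: power_mult_distrib)
    have "1 + y\<^sup>2 \<le> K2 * (1 + c\<^sup>2*y\<^sup>2/2)"
    proof -
      have "1 \<le> K2" by (simp add: K2_def)
      moreover have "y\<^sup>2 \<le> K2 * (c\<^sup>2*y\<^sup>2/2)"
      proof -
        have "y\<^sup>2 = (2/c\<^sup>2) * (c\<^sup>2*y\<^sup>2/2)" using c by (simp add: field_simps)
        also have "\<dots> \<le> K2 * (c\<^sup>2*y\<^sup>2/2)" by (intro mult_right_mono) (auto simp: K2_def)
        finally show ?thesis .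
      qed
      ultimately show ?thesis by (simp add: algebra_simps)
    qed
    also have "\<dots> \<le> K2 * exp (-c*y)" using 2 K2 by (intro mult_left_mono) auto
    finally have 3: "(1 + y\<^sup>2) * exp (c*y) \<le> K2"
      by (simp add: exp_minus field_simps)
    have "(1 + y\<^sup>2) * exp ((b-c)*y) \<le> (1 + y\<^sup>2) * exp (c*y)"
      using 1 by (intro mult_left_mono) auto
    then show ?thesis using 3 K1 by simp
  qed
  then have "(1 + y\<^sup>2) * exp ((b-c)*y) * exp (c*y) \<le> (K1 + K2) * exp (c*y)"
    by (intro mult_right_mono) auto
  then show ?thesis unfolding e K1_def K2_def by (simp add: mult.assoc)
qed

lemma S_part:
  fixes h dh :: "real \<Rightarrow> real" and \<mu> \<beta> C :: real
  assumes hder: "\<And>x. (h has_real_derivative dh x) (at x)"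
    and cont_dh: "continuous_on UNIV dh"
    and sign: "\<And>x. (x - \<mu>) * dh x \<le> 0"
    and \<beta>: "\<beta> > 0"
    and decay: "\<And>x. exp (\<beta> * h x) \<le> C / (1 + x\<^sup>2)"
    and int: "integrable lborel (\<lambda>x. exp (\<beta> * h x))"
  shows "integrable lborel (\<lambda>x. (x - \<mu>) * dh x * exp (\<beta> * h x))"
    "(\<integral>x. (x - \<mu>) * dh x * exp (\<beta> * h x) \<partial>lborel) = - (\<integral>x. exp (\<beta> * h x) \<partial>lborel) / \<beta>"
proof -
  define \<phi> where "\<phi> x = exp (\<beta> * h x)" for x
  define \<psi> where "\<psi> x = (x - \<mu>) * dh x * \<phi> x" for x
  define P where "P x = (x - \<mu>) * \<phi> x" for x
  have cont_h: "continuous_on UNIV h"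
    using hder by (intro continuous_at_imp_continuous_on) (auto intro: DERIV_isCont)
  have cont_phi: "continuous_on UNIV \<phi>" unfolding \<phi>_def
    by (intro continuous_intros cont_h)
  have cont_psi: "continuous_on UNIV \<psi>" unfolding \<psi>_def
    by (intro continuous_intros cont_phi cont_dh)
  have [measurable]: "\<phi> \<in> borel_measurable borel" "\<psi> \<in> borel_measurable borel"
    using cont_phi cont_psi by (auto intro: borel_measurable_continuous_onI)
  have psi_nonpos: "\<psi> x \<le> 0" for x
    using sign[of x] by (simp add: \<psi>_def \<phi>_def mult_nonpos_nonneg)
  have Pder: "(P has_real_derivative \<phi> x + \<beta> * \<psi> x) (at x)" for x
    unfolding P_def \<phi>_def \<psi>_def
    by (rule derivative_eq_intros refl hder | simp)+
  have iscont: "isCont (\<lambda>x. \<phi> x + \<beta> * \<psi> x) x" for x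
    using cont_phi cont_psi by (intro continuous_intros) (auto simp: continuous_on_eq_continuous_at)
  have intphi: "integrable lborel \<phi>" unfolding \<phi>_def[abs_def] by (rule int)
  define fn where "fn n x = - \<psi> x * indicator {- real n..real n} x" for n x
  have int_phi_ind: "integrable lborel (\<lambda>x. \<phi> x * indicator {- real n..real n} x)" for n
    using intphi by (intro integrable_real_mult_indicator) auto
  have int_psi_ind: "integrable lborel (\<lambda>x. \<psi> x * indicator {- real n..real n} x)" for n
    using borel_integrable_compact[of "{- real n..real n}" \<psi>] cont_psi
    by (auto simp: mult.commute continuous_on_subset)
  have FTC: "(\<integral>x. (\<phi> x + \<beta> * \<psi> x) * indicator {- real n..real n} x \<partial>lborel) = P (real n) - P (- real n)" for n
    by (rule integral_FTC_Icc_real) (auto intro: Pder iscont)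
  have fn_int: "integrable lborel (fn n)" for n
    unfolding fn_def using int_psi_ind[of n] by simp
  have fn_eq: "integral\<^sup>L lborel (fn n) = ((\<integral>x. \<phi> x * indicator {- real n..real n} x \<partial>lborel) - (P (real n) - P (- real n))) / \<beta>" for n
  proof -
    have "(\<integral>x. (\<phi> x + \<beta> * \<psi> x) * indicator {- real n..real n} x \<partial>lborel)
        = (\<integral>x. \<phi> x * indicator {- real n..real n} x \<partial>lborel) + \<beta> * (\<integral>x. \<psi> x * indicator {- real n..real n} x \<partial>lborel)"
      using int_phi_ind[of n] int_psi_ind[of n]
      by (simp add: distrib_right integral_add mult.assoc)
    then show ?thesis using FTC[of n] \<beta> unfolding fn_def
      by (simp add: field_simps)
  qed
  have ev_ind: "\<forall>\<^sub>F n in sequentially. indicator {- real n..real n} x = (1::real)" for x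
    by (rule eventually_sequentiallyI[of "nat \<lceil>\<bar>x\<bar>\<rceil>"])
       (auto split: split_indicator simp: nat_le_iff ceiling_le_iff abs_le_iff)
  have lim_phi: "(\<lambda>n. \<integral>x. \<phi> x * indicator {- real n..real n} x \<partial>lborel) \<longlonglongrightarrow> integral\<^sup>L lborel \<phi>"
  proof (rule integral_dominated_convergence[where w=\<phi>])
    show "AE x in lborel. (\<lambda>n. \<phi> x * indicator {- real n..real n} x) \<longlonglongrightarrow> \<phi> x"
    proof (rule AE_I2)
      fix x
      have "\<forall>\<^sub>F n in sequentially. \<phi> x * indicator {- real n..real n} x = \<phi> x"
        using ev_ind[of x] by eventually_elim simp
      then show "(\<lambda>n. \<phi> x * indicator {- real n..real n} x) \<longlonglongrightarrow> \<phi> x"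
        by (rule tendsto_eventually)
    qed
    show "AE x in lborel. norm (\<phi> x * indicator {- real n..real n} x) \<le> \<phi> x" for n
      by (rule AE_I2) (auto simp: \<phi>_def split: split_indicator)
  qed (auto simp: intphi)
  have Pbound: "\<bar>P x\<bar> \<le> C * (\<bar>x\<bar> + \<bar>\<mu>\<bar>) / (1 + x\<^sup>2)" for x
  proof -
    have "\<bar>P x\<bar> = \<bar>x - \<mu>\<bar> * \<phi> x" by (simp add: P_def \<phi>_def abs_mult)
    also have "\<dots> \<le> (\<bar>x\<bar> + \<bar>\<mu>\<bar>) * (C / (1 + x\<^sup>2))"
      using decay[of x] by (intro mult_mono) (auto simp: \<phi>_def)
    finally show ?thesis by (simp add: mult.commute)
  qed
  have C0: "C \<ge> 0"
  proof -
    have "0 < exp (\<beta> * h 0)" by simp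
    also have "\<dots> \<le> C" using decay[of 0] by simp
    finally show ?thesis by simp
  qed
  have Pbound2: "\<bar>P x\<bar> \<le> 2 * C * (1 + \<bar>\<mu>\<bar>) * inverse (1 + \<bar>x\<bar>)" for x
  proof -
    define a where "a = \<bar>x\<bar>"
    define m where "m = \<bar>\<mu>\<bar>"
    have a: "a \<ge> 0" and m: "m \<ge> 0" by (auto simp: a_def m_def)
    have sq: "x\<^sup>2 = a\<^sup>2" by (simp add: a_def)
    have q: "(a + m) * (1 + a) \<le> 2 * (1 + m) * (1 + a\<^sup>2)"
    proof -
      have "0 \<le> (a - 1)\<^sup>2" by simp
      then have 1: "a \<le> 1 + a\<^sup>2" using a by (simp add: power2_eq_square algebra_simps)
      have 2: "m * a \<le> m + m * a\<^sup>2" using 1 m by (metis distrib_left mult_left_mono mult_1_right)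
      have 3: "a\<^sup>2 \<ge> 0" by simp
      have 4: "0 \<le> a*a" "0 \<le> a*(a*m)" using a m by auto
      have e1: "(a + m) * (1 + a) = a + a*a + m + a*m" by (simp add: algebra_simps)
      have e2: "2 * (1 + m) * (1 + a\<^sup>2) = 2 + 2*(a*a) + 2*m + 2*(a*(a*m))" by (simp add: algebra_simps power2_eq_square)
      have h2: "a*m \<le> m + a*(a*m)" using 2 by (simp add: algebra_simps power2_eq_square)
      have h1: "a \<le> 1 + a*a" using 1 by (simp add: power2_eq_square)
      show ?thesis unfolding e1 e2 using h1 h2 4 by linarith
    qed
    have "(a + m) / (1 + a\<^sup>2) \<le> 2 * (1 + m) / (1 + a)"
      using q a by (simp add: divide_simps add_pos_nonneg)
    then have "C * ((a + m) / (1 + a\<^sup>2)) \<le> C * (2 * (1 + m) / (1 + a))"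
      using C0 by (rule mult_left_mono)
    then show ?thesis using Pbound[of x] unfolding a_def[symmetric] m_def[symmetric] sq
      by (simp add: divide_inverse mult.assoc mult.left_commute)
  qed
  have lim0: "(\<lambda>n::nat. 2 * C * (1 + \<bar>\<mu>\<bar>) * inverse (1 + real n)) \<longlonglongrightarrow> 0"
    using tendsto_mult_right_zero[OF LIMSEQ_inverse_real_of_nat, of "2 * C * (1 + \<bar>\<mu>\<bar>)"]
    by (simp add: add.commute)
  have pb1: "norm (P (real n)) \<le> 2 * C * (1 + \<bar>\<mu>\<bar>) * inverse (1 + real n)" for n
    using Pbound2[of "real n"] by simp
  have pb2: "norm (P (- real n)) \<le> 2 * C * (1 + \<bar>\<mu>\<bar>) * inverse (1 + real n)" for n
    using Pbound2[of "- real n"] by simp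
  have limP1: "(\<lambda>n. P (real n)) \<longlonglongrightarrow> 0"
    by (rule Lim_null_comparison[OF _ lim0], rule always_eventually) (use pb1 pb2 in blast)
  have limP2: "(\<lambda>n. P (- real n)) \<longlonglongrightarrow> 0"
    by (rule Lim_null_comparison[OF _ lim0], rule always_eventually) (use pb1 pb2 in blast)
  have ilim: "(\<lambda>n. integral\<^sup>L lborel (fn n)) \<longlonglongrightarrow> integral\<^sup>L lborel \<phi> / \<beta>"
    unfolding fn_eq using lim_phi limP1 limP2 \<beta>
    by (auto intro!: tendsto_eq_intros)
  have mono: "AE x in lborel. mono (\<lambda>n. fn n x)"
  proof (rule AE_I2)
    fix x show "mono (\<lambda>n. fn n x)"
      unfolding fn_def using psi_nonpos[of x]
      by (auto intro!: monoI split: split_indicator)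
  qed
  have lim: "AE x in lborel. (\<lambda>n. fn n x) \<longlonglongrightarrow> - \<psi> x"
  proof (rule AE_I2)
    fix x
    have "\<forall>\<^sub>F n in sequentially. fn n x = - \<psi> x"
      using ev_ind[of x] by eventually_elim (simp add: fn_def)
    then show "(\<lambda>n. fn n x) \<longlonglongrightarrow> - \<psi> x" by (rule tendsto_eventually)
  qed
  have "integrable lborel (\<lambda>x. - \<psi> x)"
    by (rule integrable_monotone_convergence[OF fn_int mono lim ilim]) simp
  moreover have "(\<integral>x. - \<psi> x \<partial>lborel) = integral\<^sup>L lborel \<phi> / \<beta>"
    by (rule integral_monotone_convergence[OF fn_int mono lim ilim]) simp
  ultimately have i1: "integrable lborel \<psi>" and i2: "integral\<^sup>L lborel \<psi> = - integral\<^sup>L lborel \<phi> / \<beta>"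
    by auto
  show "integrable lborel (\<lambda>x. (x - \<mu>) * dh x * exp (\<beta> * h x))"
    using i1 unfolding \<psi>_def[abs_def] \<phi>_def[abs_def] .
  show "(\<integral>x. (x - \<mu>) * dh x * exp (\<beta> * h x) \<partial>lborel) = - (\<integral>x. exp (\<beta> * h x) \<partial>lborel) / \<beta>"
    using i2 unfolding \<psi>_def[abs_def] \<phi>_def[abs_def] .
qed

lemma abs_le_1_sq: "\<bar>y::real\<bar> \<le> 1 + y\<^sup>2"
proof (cases "\<bar>y\<bar> \<le> 1")
  case True then show ?thesis by (smt (verit) zero_le_power2)
next
  case False
  then have "\<bar>y\<bar> \<le> \<bar>y\<bar> * \<bar>y\<bar>" by (intro mult_le_cancel_left1[THEN iffD2]) auto
  then show ?thesis by (simp add: power2_eq_square abs_mult_self)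
qed

lemma M_part:
  fixes h :: "real \<Rightarrow> real" and \<beta> m0 :: real
  assumes cont: "continuous_on UNIV h" and hmax: "\<And>x. h x \<le> m0" and \<beta>: "\<beta> > 0"
    and int: "\<And>s. s > 0 \<Longrightarrow> integrable lborel (\<lambda>x. exp (s * h x))"
  defines "Z \<equiv> \<lambda>b. \<integral>x. exp (b * h x) \<partial>lborel"
    and "Z1 \<equiv> \<lambda>b. \<integral>x. h x * exp (b * h x) \<partial>lborel"
  shows "Z \<beta> > 0"
    "((\<lambda>b. Z1 b / Z b) has_real_derivative
        (\<integral>x. (h x - Z1 \<beta> / Z \<beta>)\<^sup>2 * exp (\<beta> * h x) \<partial>lborel) / Z \<beta>) (at \<beta>)"
proof -
  have [measurable]: "h \<in> borel_measurable borel" using cont by (rule borel_measurable_continuous_onI)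
  have bnd: "(1 + (h x)\<^sup>2) * exp (b * h x) \<le> ((1+m0\<^sup>2) * exp (B*\<bar>m0\<bar>) + max 1 (2/c\<^sup>2)) * exp (c * h x)"
    if "c > 0" "2*c \<le> b" "b \<le> B" for b c B x
    using dom_bound[OF hmax that] by (simp add: mult.commute)
  have b1: "\<bar>h x * exp (b * h x)\<bar> \<le> (1 + (h x)\<^sup>2) * exp (b * h x)" for b x
    using abs_le_1_sq[of "h x"] by (simp add: abs_mult)
  have b2: "\<bar>h x * (h x * exp (b * h x))\<bar> \<le> (1 + (h x)\<^sup>2) * exp (b * h x)" for b x
    by (simp add: abs_mult power2_eq_square[symmetric] mult.assoc[symmetric])
  have int1: "integrable lborel (\<lambda>x. h x * exp (b * h x))" if b: "b > 0" for b
  proof (rule Bochner_Integration.integrable_bound)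
    let ?K = "(1+m0\<^sup>2) * exp (b*\<bar>m0\<bar>) + max 1 (2/(b/4)\<^sup>2)"
    show "integrable lborel (\<lambda>x. ?K * exp ((b/4) * h x))" using int[of "b/4"] b by simp
    show "AE x in lborel. norm (h x * exp (b * h x)) \<le> norm (?K * exp ((b/4) * h x))"
    proof (rule AE_I2)
      fix x
      have "norm (h x * exp (b * h x)) \<le> ?K * exp ((b/4) * h x)"
        using b1[of x b] bnd[of "b/4" b b x] b by simp
      also have "\<dots> \<le> norm (?K * exp ((b/4) * h x))" by simp
      finally show "norm (h x * exp (b * h x)) \<le> norm (?K * exp ((b/4) * h x))" .
    qed
  qed measurable
  have int2: "integrable lborel (\<lambda>x. h x * (h x * exp (b * h x)))" if b: "b > 0" for b
  proof (rule Bochner_Integration.integrable_bound)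
    let ?K = "(1+m0\<^sup>2) * exp (b*\<bar>m0\<bar>) + max 1 (2/(b/4)\<^sup>2)"
    show "integrable lborel (\<lambda>x. ?K * exp ((b/4) * h x))" using int[of "b/4"] b by simp
    show "AE x in lborel. norm (h x * (h x * exp (b * h x))) \<le> norm (?K * exp ((b/4) * h x))"
    proof (rule AE_I2)
      fix x
      have "norm (h x * (h x * exp (b * h x))) \<le> ?K * exp ((b/4) * h x)"
        using b2[of x b] bnd[of "b/4" b b x] b by simp
      also have "\<dots> \<le> norm (?K * exp ((b/4) * h x))" by simp
      finally show "norm (h x * (h x * exp (b * h x))) \<le> norm (?K * exp ((b/4) * h x))" .
    qed
  qed measurable
  define Z2 where "Z2 = (\<integral>x. h x * (h x * exp (\<beta> * h x)) \<partial>lborel)"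
  let ?K = "(1+m0\<^sup>2) * exp ((2*\<beta>)*\<bar>m0\<bar>) + max 1 (2/(\<beta>/4)\<^sup>2)"
  have gint: "integrable lborel (\<lambda>x. ?K * exp ((\<beta>/4) * h x))" using int[of "\<beta>/4"] \<beta> by simp
  have dZ: "(Z has_real_derivative Z1 \<beta>) (at \<beta>)"
    unfolding Z_def Z1_def
  proof (rule deriv_under_integral[where a="\<beta>/2" and c="2*\<beta>" and g="\<lambda>x. ?K * exp ((\<beta>/4) * h x)"])
    show "\<beta>/2 < \<beta>" "\<beta> < 2*\<beta>" using \<beta> by auto
    show "integrable lborel (\<lambda>x. exp (b * h x))" if "b \<in> {\<beta>/2<..<2*\<beta>}" for b
      using int[of b] that \<beta> by simp
    show "((\<lambda>b. exp (b * h x)) has_real_derivative h x * exp (b * h x)) (at b)" for b x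
      by (rule derivative_eq_intros refl | simp)+
    show "integrable lborel (\<lambda>x. ?K * exp ((\<beta>/4) * h x))" by (rule gint)
    show "\<bar>h x * exp (b * h x)\<bar> \<le> ?K * exp ((\<beta>/4) * h x)" if "b \<in> {\<beta>/2<..<2*\<beta>}" for b x
      using b1[of x b] bnd[of "\<beta>/4" b "2*\<beta>" x] that \<beta> by simp
    show "(\<lambda>x. h x * exp (\<beta> * h x)) \<in> borel_measurable lborel" by measurable
  qed
  have dZ1: "(Z1 has_real_derivative Z2) (at \<beta>)"
    unfolding Z2_def Z1_def
  proof (rule deriv_under_integral[where a="\<beta>/2" and c="2*\<beta>" and g="\<lambda>x. ?K * exp ((\<beta>/4) * h x)"])
    show "\<beta>/2 < \<beta>" "\<beta> < 2*\<beta>" using \<beta> by auto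
    show "integrable lborel (\<lambda>x. h x * exp (b * h x))" if "b \<in> {\<beta>/2<..<2*\<beta>}" for b
      using int1[of b] that \<beta> by simp
    show "((\<lambda>b. h x * exp (b * h x)) has_real_derivative h x * (h x * exp (b * h x))) (at b)" for b x
      by (rule derivative_eq_intros refl | simp)+
    show "integrable lborel (\<lambda>x. ?K * exp ((\<beta>/4) * h x))" by (rule gint)
    show "\<bar>h x * (h x * exp (b * h x))\<bar> \<le> ?K * exp ((\<beta>/4) * h x)" if "b \<in> {\<beta>/2<..<2*\<beta>}" for b x
      using b2[of x b] bnd[of "\<beta>/4" b "2*\<beta>" x] that \<beta> by simp
    show "(\<lambda>x. h x * (h x * exp (\<beta> * h x))) \<in> borel_measurable lborel" by measurable
  qed
  have Zpos: "Z \<beta> > 0"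
  proof -
    have i: "integrable lborel (\<lambda>x. exp (\<beta> * h x))" using int \<beta> by simp
    have "Z \<beta> \<ge> 0" unfolding Z_def by (rule integral_nonneg_AE) simp
    moreover have "Z \<beta> \<noteq> 0"
    proof
      assume "Z \<beta> = 0"
      then have "AE x in lborel. exp (\<beta> * h x) = 0"
        using integral_nonneg_eq_0_iff_AE[OF i] unfolding Z_def by simp
      then have "ae_filter (lborel::real measure) = bot" by (simp add: eventually_False)
      then show False by (simp add: ae_filter_eq_bot_iff emeasure_lborel_UNIV)
    qed
    ultimately show ?thesis by simp
  qed
  then show "Z \<beta> > 0" .
  have d: "((\<lambda>b. Z1 b / Z b) has_real_derivative (Z2 * Z \<beta> - Z1 \<beta> * Z1 \<beta>) / (Z \<beta> * Z \<beta>)) (at \<beta>)"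
    using DERIV_divide[OF dZ1 dZ] Zpos by simp
  define E where "E = Z1 \<beta> / Z \<beta>"
  have "(\<integral>x. (h x - E)\<^sup>2 * exp (\<beta> * h x) \<partial>lborel)
      = (\<integral>x. h x * (h x * exp (\<beta> * h x)) - (2*E) * (h x * exp (\<beta> * h x)) + E\<^sup>2 * exp (\<beta> * h x) \<partial>lborel)"
    by (rule Bochner_Integration.integral_cong) (auto simp: power2_eq_square algebra_simps)
  also have "\<dots> = Z2 - 2*E * Z1 \<beta> + E\<^sup>2 * Z \<beta>"
    using int1[OF \<beta>] int2[OF \<beta>] int[OF \<beta>]
    by (simp add: Z2_def Z1_def Z_def integral_add integral_diff)
  finally have V: "(\<integral>x. (h x - E)\<^sup>2 * exp (\<beta> * h x) \<partial>lborel) = Z2 - 2*E * Z1 \<beta> + E\<^sup>2 * Z \<beta>" .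
  have "(Z2 * Z \<beta> - Z1 \<beta> * Z1 \<beta>) / (Z \<beta> * Z \<beta>) = (Z2 - 2*E * Z1 \<beta> + E\<^sup>2 * Z \<beta>) / Z \<beta>"
    using Zpos by (simp add: E_def field_simps power2_eq_square)
  then show "((\<lambda>b. Z1 b / Z b) has_real_derivative
        (\<integral>x. (h x - Z1 \<beta> / Z \<beta>)\<^sup>2 * exp (\<beta> * h x) \<partial>lborel) / Z \<beta>) (at \<beta>)"
    using d V unfolding E_def by simp
qed

lemma decay_combine:
  fixes h :: "real \<Rightarrow> real" and s T1 T2 K1 K2 m0 :: real
  assumes r: "\<forall>t\<ge>T1. exp (s * h t) \<le> exp K1 / t\<^sup>2"
    and l: "\<forall>t\<ge>T2. exp (s * h (-t)) \<le> exp K2 / t\<^sup>2"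
    and hmax: "\<And>x. h x \<le> m0" and s: "s > 0"
  shows "\<exists>C. \<forall>x. exp (s * h x) \<le> C / (1 + x\<^sup>2)"
proof -
  define R where "R = max 1 (max T1 T2)"
  define C where "C = 2 * exp K1 + 2 * exp K2 + exp (s * m0) * (1 + R\<^sup>2)"
  have R: "R \<ge> 1" "R \<ge> T1" "R \<ge> T2" by (auto simp: R_def)
  have "exp (s * h x) \<le> C / (1 + x\<^sup>2)" for x
  proof -
    have p1: "0 < 1 + x\<^sup>2" by (simp add: add_pos_nonneg)
    have aux: "exp K / t\<^sup>2 \<le> 2 * exp K / (1 + x\<^sup>2)" if "t \<ge> 1" "t\<^sup>2 = x\<^sup>2" for K t
    proof -
      have "1 \<le> t\<^sup>2" using that(1) by (simp add: one_le_power)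
      then have "1 + x\<^sup>2 \<le> 2 * t\<^sup>2" using that(2) by simp
      then show ?thesis using that p1 by (simp add: divide_simps)
    qed
    have n1: "0 \<le> 2 * exp K1 / (1 + x\<^sup>2)" "0 \<le> 2 * exp K2 / (1 + x\<^sup>2)"
      "0 \<le> exp (s * m0) * (1 + R\<^sup>2) / (1 + x\<^sup>2)" using p1 by auto
    have n4: "exp (s * m0) * ((1 + R\<^sup>2) / (1 + x\<^sup>2)) = exp (s * m0) * (1 + R\<^sup>2) / (1 + x\<^sup>2)" by simp
    have "exp (s * h x) \<le> 2 * exp K1 / (1 + x\<^sup>2) + 2 * exp K2 / (1 + x\<^sup>2) + exp (s * m0) * (1 + R\<^sup>2) / (1 + x\<^sup>2)"
    proof (cases "x \<ge> R")
      case True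
      then have "exp (s * h x) \<le> exp K1 / x\<^sup>2" using r R by auto
      also have "\<dots> \<le> 2 * exp K1 / (1 + x\<^sup>2)" using aux[of x K1] True R by simp
      finally show ?thesis using n1 by linarith
    next
      case False
      show ?thesis
      proof (cases "x \<le> -R")
        case True
        then have "exp (s * h (-(-x))) \<le> exp K2 / (-x)\<^sup>2" using l R by (intro l[rule_format]) auto
        also have "\<dots> \<le> 2 * exp K2 / (1 + x\<^sup>2)" using aux[of "-x" K2] True R by simp
        finally have "exp (s * h x) \<le> 2 * exp K2 / (1 + x\<^sup>2)" by simp
        then show ?thesis using n1 by linarith
      next
        case False2: False
        have "\<bar>x\<bar> \<le> R" using False False2 by auto
        then have "x\<^sup>2 \<le> R\<^sup>2" by (metis abs_le_square_iff abs_of_nonneg R(1) order_trans zero_le_one)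
        then have q: "1 \<le> (1 + R\<^sup>2) / (1 + x\<^sup>2)" using p1 by simp
        have "exp (s * h x) \<le> exp (s * m0)" using hmax[of x] s by simp
        also have "\<dots> \<le> exp (s * m0) * ((1 + R\<^sup>2) / (1 + x\<^sup>2))" using mult_left_mono[OF q, of "exp (s * m0)"] by simp
        finally show ?thesis using n1 n4 by linarith
      qed
    qed
    also have "\<dots> = C / (1 + x\<^sup>2)" by (simp add: C_def add_divide_distrib)
    finally show ?thesis .
  qed
  then show ?thesis by blast
qed

lemma int_from_decay:
  fixes h :: "real \<Rightarrow> real"
  assumes cont: "continuous_on UNIV h" and d: "\<And>x. exp (s * h x) \<le> C / (1 + x\<^sup>2)"
  shows "integrable lborel (\<lambda>x. exp (s * h x))"
proof (rule Bochner_Integration.integrable_bound)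
  have "integrable lborel (\<lambda>x::real. inverse (1 + x^2))"
    using integrable_inverse_1_plus_square by (simp add: set_integrable_def einterval_def)
  then show "integrable lborel (\<lambda>x. C * inverse (1 + x^2))" by simp
  have [measurable]: "h \<in> borel_measurable borel" using cont by (rule borel_measurable_continuous_onI)
  show "(\<lambda>x. exp (s * h x)) \<in> borel_measurable lborel" by measurable
  show "AE x in lborel. norm (exp (s * h x)) \<le> norm (C * inverse (1 + x^2))"
  proof (rule AE_I2)
    fix x
    have "exp (s * h x) \<le> C * inverse (1 + x^2)" using d[of x] by (simp add: divide_inverse)
    then show "norm (exp (s * h x)) \<le> norm (C * inverse (1 + x^2))" by simp
  qed
qed

theorem proposition3:
  fixes f :: "real \<Rightarrow> real" and \<mu> M \<beta> :: real
  assumes pos: "\<forall>x. f x > 0"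
    and smooth: "C4 f"
    and unimodal: "mono_on {..\<mu>} f" "antimono_on {\<mu>..} f"
    and regvar: "\<exists>\<alpha>>0. \<forall>x>0.
        ((\<lambda>t. (- ln (f (t * x))) / (- ln (f t))) \<longlongrightarrow> x powr \<alpha>) at_infinity"
    and M_pos: "M > 0"
    and bound: "\<forall>x. \<bar>(deriv ^^ 4) (logf f) x\<bar> < M"
    and beta: "\<beta> > 0"
  shows "(Mfun f has_real_derivative Varb f \<beta> (logf f)) (at \<beta>)
       \<and> Sfun f \<mu> \<beta> = - 1 / \<beta>
       \<and> (Sfun f \<mu> has_real_derivative 1 / \<beta>\<^sup>2) (at \<beta>)"
proof -
  define h where "h = logf f"
  have h_eq: "h x = ln (f x)" for x by (simp add: h_def logf_def)
  have pw: "f x powr b = exp (b * h x)" for x b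
    using pos[rule_format, of x] by (simp add: powr_def h_eq)
  have sm: "((deriv ^^ k) f has_real_derivative (deriv ^^ Suc k) f x) (at x)" if "k < 4" for k x
    using smooth that unfolding C4_def by blast
  have fder: "(f has_real_derivative deriv f x) (at x)" for x
    using sm[of 0 x] by simp
  have f'der: "(deriv f has_real_derivative deriv (deriv f) x) (at x)" for x
    using sm[of 1 x] by simp
  have hder: "(h has_real_derivative deriv f x / f x) (at x)" for x
  proof -
    have "((\<lambda>x. ln (f x)) has_real_derivative (1 / f x) * deriv f x) (at x)"
      using pos[rule_format, of x] by (auto intro!: derivative_eq_intros fder)
    moreover have "h = (\<lambda>x. ln (f x))" by (simp add: h_eq fun_eq_iff)
    ultimately show ?thesis by simp
  qed
  have dh_eq: "deriv (logf f) x = deriv f x / f x" for x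
    using hder[of x] unfolding h_def by (rule DERIV_imp_deriv)
  have cont_f: "continuous_on UNIV f"
    using fder by (intro continuous_at_imp_continuous_on) (auto intro: DERIV_isCont)
  have cont_f': "continuous_on UNIV (deriv f)"
    using f'der by (intro continuous_at_imp_continuous_on) (auto intro: DERIV_isCont)
  have cont_h: "continuous_on UNIV h"
    using hder by (intro continuous_at_imp_continuous_on) (auto intro: DERIV_isCont)
  have cont_dh: "continuous_on UNIV (\<lambda>x. deriv f x / f x)"
    using cont_f cont_f' pos by (intro continuous_intros) (auto simp: order_less_imp_not_eq2)
  have mono_left: "f s \<le> f t" if "s \<le> t" "t \<le> \<mu>" for s t
    using unimodal(1) that by (intro mono_onD[of "{..\<mu>}" f]) auto
  have mono_right: "f t \<le> f s" if "\<mu> \<le> s" "s \<le> t" for s t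
    using monotone_onD[OF unimodal(2), of s t] that by auto
  have fmax: "f x \<le> f \<mu>" for x
    using mono_left[of x \<mu>] mono_right[of \<mu> x] by (cases "x \<le> \<mu>") auto
  have hmax: "h x \<le> h \<mu>" for x
    using fmax[of x] pos by (simp add: h_eq)
  have sign: "(x - \<mu>) * (deriv f x / f x) \<le> 0" for x
  proof -
    have "(x - \<mu>) * deriv f x \<le> 0"
    proof (cases "x > \<mu>")
      case True
      have "\<not> deriv f x > 0"
      proof
        assume "deriv f x > 0"
        then obtain d where d: "d > 0" "\<And>h. h > 0 \<Longrightarrow> h < d \<Longrightarrow> f x < f (x + h)"
          using DERIV_pos_inc_right[OF fder] by blast
        have "f x < f (x + d/2)" using d by simp
        moreover have "f (x + d/2) \<le> f x" using mono_right[of x "x + d/2"] True d by simp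
        ultimately show False by simp
      qed
      then show ?thesis using True by (simp add: mult_nonneg_nonpos)
    next
      case False
      show ?thesis
      proof (cases "x = \<mu>")
        case True then show ?thesis by simp
      next
        case False2: False
        then have xl: "x < \<mu>" using False by simp
        have "\<not> deriv f x < 0"
        proof
          assume "deriv f x < 0"
          then obtain d where d: "d > 0" "\<And>h. h > 0 \<Longrightarrow> h < d \<Longrightarrow> f x > f (x + h)"
            using DERIV_neg_dec_right[OF fder] by blast
          define e where "e = min (d/2) (\<mu> - x)"
          have e: "e > 0" "e < d" "x + e \<le> \<mu>" using d xl by (auto simp: e_def)
          have "f x > f (x + e)" using d e by simp
          moreover have "f x \<le> f (x + e)" using mono_left[of x "x + e"] e by simp
          ultimately show False by simp
        qed
        then show ?thesis using xl by (simp add: mult_nonpos_nonneg)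
      qed
    qed
    then show ?thesis using pos[rule_format, of x] by (simp add: divide_nonpos_pos mult.assoc[symmetric] times_divide_eq_right)
  qed
  obtain \<alpha> where \<alpha>: "\<alpha> > 0" and rv: "((\<lambda>t. (- ln (f (t * 2))) / (- ln (f t))) \<longlongrightarrow> 2 powr \<alpha>) at_infinity"
    using regvar by force
  have L1: "2 powr \<alpha> > (1::real)" using \<alpha> by simp
  obtain a1 \<gamma>1 T1 where g1: "a1 > 0" "\<gamma>1 > 0" "T1 > 0" "\<forall>t\<ge>T1. a1 * t powr \<gamma>1 \<le> - ln (f t)"
  proof -
    have "\<exists>a>0. \<exists>\<gamma>>0. \<exists>T>0. \<forall>t\<ge>T. a * t powr \<gamma> \<le> - ln (f t)"
    proof (rule growth[where c=\<mu> and L="2 powr \<alpha>"])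
      show "- ln (f s) \<le> - ln (f t)" if "\<mu> \<le> s" "s \<le> t" for s t
        using mono_right[OF that] pos by simp
      show "((\<lambda>t. - ln (f (t * 2)) / - ln (f t)) \<longlongrightarrow> 2 powr \<alpha>) at_top"
        using rv by (rule tendsto_mono[OF at_top_le_at_infinity])
    qed (rule L1)
    then show ?thesis using that by blast
  qed
  obtain a2 \<gamma>2 T2 where g2: "a2 > 0" "\<gamma>2 > 0" "T2 > 0" "\<forall>t\<ge>T2. a2 * t powr \<gamma>2 \<le> - ln (f (-t))"
  proof -
    have "\<exists>a>0. \<exists>\<gamma>>0. \<exists>T>0. \<forall>t\<ge>T. a * t powr \<gamma> \<le> - ln (f (-t))"
    proof (rule growth[where c="-\<mu>" and L="2 powr \<alpha>"])
      show "- ln (f (-s)) \<le> - ln (f (-t))" if "-\<mu> \<le> s" "s \<le> t" for s t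
        using mono_left[of "-t" "-s"] that pos by simp
      have fl: "filterlim uminus at_infinity (at_top :: real filter)"
        using filterlim_uminus_at_bot_at_top by (rule filterlim_mono) (auto simp: at_bot_le_at_infinity)
      have "((\<lambda>t. (- ln (f ((-t) * 2))) / (- ln (f (-t)))) \<longlongrightarrow> 2 powr \<alpha>) at_top"
        using filterlim_compose[OF rv fl] by (simp add: o_def)
      then show "((\<lambda>t. - ln (f (- (t * 2))) / - ln (f (- t))) \<longlongrightarrow> 2 powr \<alpha>) at_top"
        by simp
    qed (rule L1)
    then show ?thesis using that by blast
  qed
  have decay: "\<exists>C. \<forall>x. exp (s * h x) \<le> C / (1 + x\<^sup>2)" if s: "s > 0" for s
  proof -
    obtain K1 where K1: "\<forall>t\<ge>T1. exp (- s * (- ln (f t))) \<le> exp K1 / t^2"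
      using growth_log[OF g1(1-3) s g1(4)] by blast
    obtain K2 where K2: "\<forall>t\<ge>T2. exp (- s * (- ln (f (-t)))) \<le> exp K2 / t^2"
      using growth_log[OF g2(1-3) s, of "\<lambda>t. - ln (f (-t))"] g2(4) by blast
    show ?thesis
    proof (rule decay_combine[OF _ _ hmax s])
      show "\<forall>t\<ge>T1. exp (s * h t) \<le> exp K1 / t\<^sup>2" using K1 by (simp add: h_eq)
      show "\<forall>t\<ge>T2. exp (s * h (-t)) \<le> exp K2 / t\<^sup>2" using K2 by (simp add: h_eq)
    qed
  qed
  have int: "integrable lborel (\<lambda>x. exp (s * h x))" if "s > 0" for s
    using decay[OF that] int_from_decay[OF cont_h] by blast
  note MP = M_part[OF cont_h hmax _ int]
  have Mfun_eq: "Mfun f = (\<lambda>b. (\<integral>x. h x * exp (b * h x) \<partial>lborel) / (\<integral>x. exp (b * h x) \<partial>lborel))"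
    by (simp add: fun_eq_iff Mfun_def Eb_def Zb_def pw h_def)
  have Varb_eq: "Varb f \<beta> (logf f) = (\<integral>x. (h x - (\<integral>x. h x * exp (\<beta> * h x) \<partial>lborel) / (\<integral>x. exp (\<beta> * h x) \<partial>lborel))\<^sup>2 * exp (\<beta> * h x) \<partial>lborel) / (\<integral>x. exp (\<beta> * h x) \<partial>lborel)"
    by (simp add: Varb_def Eb_def Zb_def pw h_def)
  have part1: "(Mfun f has_real_derivative Varb f \<beta> (logf f)) (at \<beta>)"
    unfolding Mfun_eq Varb_eq by (rule MP(2)[OF beta])
  have S_eq: "Sfun f \<mu> b = - 1 / b" if b: "b > 0" for b
  proof -
    obtain C where C: "\<forall>x. exp (b * h x) \<le> C / (1 + x\<^sup>2)" using decay[OF b] by blast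
    have SP: "(\<integral>x. (x - \<mu>) * (deriv f x / f x) * exp (b * h x) \<partial>lborel) = - (\<integral>x. exp (b * h x) \<partial>lborel) / b"
      by (rule S_part(2)[OF hder cont_dh sign b _ int[OF b]]) (use C in auto)
    have Zp: "(\<integral>x. exp (b * h x) \<partial>lborel) > 0" using MP(1)[OF b] .
    have "Sfun f \<mu> b = (\<integral>x. (x - \<mu>) * (deriv f x / f x) * exp (b * h x) \<partial>lborel) / (\<integral>x. exp (b * h x) \<partial>lborel)"
      by (simp add: Sfun_def Eb_def Zb_def kfun_def pw dh_eq)
    also have "\<dots> = - 1 / b" using SP Zp b by (simp add: field_simps)
    finally show ?thesis .
  qed
  have part3: "(Sfun f \<mu> has_real_derivative 1 / \<beta>\<^sup>2) (at \<beta>)"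
  proof (rule has_field_derivative_transform_within_open[where f="\<lambda>b. - 1 / b" and S="{0<..}"])
    show "((\<lambda>b. - 1 / b) has_real_derivative 1 / \<beta>\<^sup>2) (at \<beta>)"
      using beta by (auto intro!: derivative_eq_intros simp: power2_eq_square)
  qed (use beta S_eq in auto)
  show ?thesis using part1 S_eq[OF beta] part3 by blast
qed

end
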